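(* Let $G=(V,E)$ be a connected undirected graph with labeled nodes $1,\dots,n_l$ ($1\le n_l<n$) and edge costs $d_e>0$. For every $\lambda\ge0$ and every unlabeled node $p$, the flow-based prediction weights satisfy $w_i(p)\ge0$ for all $i=1,\dots,n_l$ and $\sum_{i=1}^{n_l}w_i(p)=1$. Consequently the prediction $f(p)=\sum_i w_i(p)f(i)$ lies in $[\min_i f(i),\max_i f(i)]$ (maximum principle).
   Context: Orient each edge arbitrarily; let $A$ be the $n\times m$ signed incidence matrix ($A_{ie}=+1$, $A_{je}=-1$ for $e$ oriented from $i$ to $j$), $A_l$ its rows $1,\dots,n_l$ and $A_u$ its remaining rows. For unlabeled $p$, $\vec b_p\in\mathbb R^{n-n_l}$ is zero except $-1$ at the entry of $p$. For $\lambda\ge0$, $\vec x$ is the unique minimizer of $\frac12\sum_{e=1}^m d_e(x_e^2+\lambda|x_e|)$ subject to $A_u\vec x=\vec b_p$, and $\vec w(p)=A_l\vec x$. *)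

theory Defs
  imports Main Complex_Main
begin

text \<open>Graph on vertices 0..<n (paper's node k corresponds to k-1), edges indexed 0..<m,
  edge e oriented from src e to dst e.\<close>

definition valid_graph :: "nat \<Rightarrow> nat \<Rightarrow> (nat \<Rightarrow> nat) \<Rightarrow> (nat \<Rightarrow> nat) \<Rightarrow> bool" where
  "valid_graph n m src dst \<longleftrightarrow> (\<forall>e<m. src e < n \<and> dst e < n \<and> src e \<noteq> dst e)"

definition adj_rel :: "nat \<Rightarrow> (nat \<Rightarrow> nat) \<Rightarrow> (nat \<Rightarrow> nat) \<Rightarrow> (nat \<times> nat) set" where
  "adj_rel m src dst = {(src e, dst e) | e. e < m} \<union> {(dst e, src e) | e. e < m}"

definition graph_connected :: "nat \<Rightarrow> nat \<Rightarrow> (nat \<Rightarrow> nat) \<Rightarrow> (nat \<Rightarrow> nat) \<Rightarrow> bool" where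
  "graph_connected n m src dst \<longleftrightarrow> (\<forall>u<n. \<forall>v<n. (u, v) \<in> (adj_rel m src dst)\<^sup>*)"

definition incidence :: "(nat \<Rightarrow> nat) \<Rightarrow> (nat \<Rightarrow> nat) \<Rightarrow> nat \<Rightarrow> nat \<Rightarrow> real" where
  "incidence src dst i e = (if i = src e then 1 else if i = dst e then -1 else 0)"

definition flow_objective :: "nat \<Rightarrow> (nat \<Rightarrow> real) \<Rightarrow> real \<Rightarrow> (nat \<Rightarrow> real) \<Rightarrow> real" where
  "flow_objective m d lam x = (1/2) * (\<Sum>e<m. d e * ((x e)\<^sup>2 + lam * \<bar>x e\<bar>))"

text \<open>Constraint A_u x = b_p: rows of unlabeled nodes nl..<n.\<close>
definition flow_feasible :: "nat \<Rightarrow> nat \<Rightarrow> nat \<Rightarrow> (nat \<Rightarrow> nat) \<Rightarrow> (nat \<Rightarrow> nat) \<Rightarrow> nat \<Rightarrow> (nat \<Rightarrow> real) \<Rightarrow> bool" where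
  "flow_feasible n nl m src dst p x \<longleftrightarrow>
     (\<forall>q. nl \<le> q \<and> q < n \<longrightarrow> (\<Sum>e<m. incidence src dst q e * x e) = (if q = p then -1 else 0))"

definition flow_minimizer :: "nat \<Rightarrow> nat \<Rightarrow> nat \<Rightarrow> (nat \<Rightarrow> nat) \<Rightarrow> (nat \<Rightarrow> nat) \<Rightarrow> (nat \<Rightarrow> real) \<Rightarrow> real \<Rightarrow> nat \<Rightarrow> (nat \<Rightarrow> real) \<Rightarrow> bool" where
  "flow_minimizer n nl m src dst d lam p x \<longleftrightarrow>
     flow_feasible n nl m src dst p x \<and>
     (\<forall>y. flow_feasible n nl m src dst p y \<longrightarrow> flow_objective m d lam x \<le> flow_objective m d lam y)"

definition flow_weight :: "nat \<Rightarrow> (nat \<Rightarrow> nat) \<Rightarrow> (nat \<Rightarrow> nat) \<Rightarrow> (nat \<Rightarrow> real) \<Rightarrow> nat \<Rightarrow> real" where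
  "flow_weight m src dst x i = (\<Sum>e<m. incidence src dst i e * x e)"

end

theory Submission imports Defs begin

definition flowrel :: "nat \<Rightarrow> (nat \<Rightarrow> nat) \<Rightarrow> (nat \<Rightarrow> nat) \<Rightarrow> (nat \<Rightarrow> real) \<Rightarrow> (nat \<times> nat) set" where
  "flowrel m src dst x = {(a,b). \<exists>e<m. (src e = a \<and> dst e = b \<and> x e > 0) \<or> (dst e = a \<and> src e = b \<and> x e < 0)}"

lemma incidence_alt:
  assumes "src e \<noteq> dst e"
  shows "incidence src dst q e = (if q = src e then 1 else 0) - (if q = dst e then 1 else 0)"
  using assms unfolding incidence_def by auto

lemma walk_exists:
  assumes vg: "valid_graph n m src dst"
    and "(u,v) \<in> (flowrel m src dst x)\<^sup>*"
  shows "\<exists>c. (\<forall>q. (\<Sum>e<m. incidence src dst q e * c e) = (if q = u then 1 else 0) - (if q = v then 1 else 0))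
           \<and> (\<forall>e<m. (c e > 0 \<longrightarrow> x e > 0) \<and> (c e < 0 \<longrightarrow> x e < 0))"
  using assms(2)
proof (induction rule: converse_rtrancl_induct)
  case base
  show ?case by (rule exI[of _ "\<lambda>_. 0"]) simp
next
  case (step a w)
  then obtain c where c1: "\<forall>q. (\<Sum>e<m. incidence src dst q e * c e) = (if q = w then 1 else 0) - (if q = v then 1 else 0)"
    and c2: "\<forall>e<m. (c e > 0 \<longrightarrow> x e > 0) \<and> (c e < 0 \<longrightarrow> x e < 0)" by blast
  from step(1) obtain e where e: "e < m" and
    or: "(src e = a \<and> dst e = w \<and> x e > 0) \<or> (dst e = a \<and> src e = w \<and> x e < 0)"
    unfolding flowrel_def by blast
  have sd: "src e \<noteq> dst e" using vg e unfolding valid_graph_def by blast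
  define s :: real where "s = (if x e > 0 then 1 else -1)"
  define c' where "c' = (\<lambda>e'. c e' + (if e' = e then s else 0))"
  have "\<forall>q. (\<Sum>e'<m. incidence src dst q e' * c' e') = (if q = a then 1 else 0) - (if q = v then 1 else 0)"
  proof
    fix q
    have "(\<Sum>e'<m. incidence src dst q e' * c' e') = (\<Sum>e'<m. incidence src dst q e' * c e') + (\<Sum>e'<m. incidence src dst q e' * (if e' = e then s else 0))"
      unfolding c'_def by (simp add: distrib_left sum.distrib)
    also have "(\<Sum>e'<m. incidence src dst q e' * (if e' = e then s else 0)) = incidence src dst q e * s"
      using e by (simp add: if_distrib cong: if_cong)
    also have "incidence src dst q e * s = (if q = a then 1 else 0) - (if q = w then 1 else 0)"
      using or sd unfolding s_def incidence_def by auto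
    finally show "(\<Sum>e'<m. incidence src dst q e' * c' e') = (if q = a then 1 else 0) - (if q = v then 1 else 0)"
      using c1 by simp
  qed
  moreover have "\<forall>e'<m. (c' e' > 0 \<longrightarrow> x e' > 0) \<and> (c' e' < 0 \<longrightarrow> x e' < 0)"
    using c2 or unfolding c'_def s_def by (auto split: if_splits)
  ultimately show ?case by blast
qed

lemma term_dec:
  fixes x c eps lam :: real
  assumes "c > 0 \<longrightarrow> x > 0" "c < 0 \<longrightarrow> x < 0" "eps > 0" "eps * \<bar>c\<bar> \<le> \<bar>x\<bar>" "c \<noteq> 0" "lam \<ge> 0"
  shows "(x - eps * c)\<^sup>2 + lam * \<bar>x - eps * c\<bar> < x\<^sup>2 + lam * \<bar>x\<bar>"
proof (cases "c > 0")
  case True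
  then have x: "x > 0" using assms by auto
  have ec: "eps * c > 0" using True assms by simp
  have "0 \<le> x - eps*c" using assms True x by auto
  moreover have "x - eps * c < x" using ec by simp
  ultimately have "(x - eps * c)\<^sup>2 < x\<^sup>2" by (simp add: power_strict_mono)
  moreover have "lam * \<bar>x - eps * c\<bar> \<le> lam * \<bar>x\<bar>" using \<open>0 \<le> x - eps*c\<close> ec x assms(6)
    by (intro mult_left_mono) auto
  ultimately show ?thesis by linarith
next
  case False
  then have c: "c < 0" using assms by auto
  then have x: "x < 0" using assms by auto
  have ec: "eps * c < 0" using c assms by (simp add: mult_pos_neg)
  have "x - eps*c \<le> 0" using assms c x by auto
  moreover have "x < x - eps * c" using ec by simp
  ultimately have "(-(x - eps * c))\<^sup>2 < (-x)\<^sup>2" by (intro power_strict_mono) auto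
  then have "(x - eps * c)\<^sup>2 < x\<^sup>2" by (simp add: power2_eq_square algebra_simps)
  moreover have "lam * \<bar>x - eps * c\<bar> \<le> lam * \<bar>x\<bar>" using \<open>x - eps*c \<le> 0\<close> ec x assms(6)
    by (intro mult_left_mono) auto
  ultimately show ?thesis by linarith
qed

lemma term_le:
  fixes x c eps lam :: real
  assumes "c > 0 \<longrightarrow> x > 0" "c < 0 \<longrightarrow> x < 0" "eps > 0" "eps * \<bar>c\<bar> \<le> \<bar>x\<bar>" "lam \<ge> 0"
  shows "(x - eps * c)\<^sup>2 + lam * \<bar>x - eps * c\<bar> \<le> x\<^sup>2 + lam * \<bar>x\<bar>"
  using term_dec[OF assms(1-4) _ assms(5)] by (cases "c = 0") auto

lemma obj_dec:
  assumes d: "\<forall>e<m. d e > 0" and lam: "lam \<ge> 0"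
    and c2: "\<forall>e<m. (c e > 0 \<longrightarrow> x e > 0) \<and> (c e < 0 \<longrightarrow> x e < 0)"
    and nz: "e0 < m" "c e0 \<noteq> 0"
  shows "\<exists>eps>0. flow_objective m d lam (\<lambda>e. x e - eps * c e) < flow_objective m d lam x"
proof -
  define S where "S = {e. e < m \<and> c e \<noteq> 0}"
  have fin: "finite S" unfolding S_def by simp
  have ne: "S \<noteq> {}" using nz unfolding S_def by blast
  define eps where "eps = Min ((\<lambda>e. \<bar>x e\<bar> / \<bar>c e\<bar>) ` S)"
  have pos: "\<forall>e\<in>S. \<bar>x e\<bar> / \<bar>c e\<bar> > 0"
  proof
    fix e assume "e \<in> S"
    then have "e < m" "c e \<noteq> 0" unfolding S_def by auto
    then have "x e \<noteq> 0" using c2 by (metis less_irrefl linorder_neqE_linordered_idom)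
    then show "\<bar>x e\<bar> / \<bar>c e\<bar> > 0" using \<open>c e \<noteq> 0\<close> by simp
  qed
  have epos: "eps > 0" unfolding eps_def using fin ne pos by simp
  have ele: "eps * \<bar>c e\<bar> \<le> \<bar>x e\<bar>" if "e < m" for e
  proof (cases "c e = 0")
    case True then show ?thesis by simp
  next
    case False
    then have "e \<in> S" using that unfolding S_def by simp
    then have "eps \<le> \<bar>x e\<bar> / \<bar>c e\<bar>" unfolding eps_def using fin by simp
    then show ?thesis using False by (simp add: field_simps)
  qed
  have "(\<Sum>e<m. d e * ((x e - eps * c e)\<^sup>2 + lam * \<bar>x e - eps * c e\<bar>)) < (\<Sum>e<m. d e * ((x e)\<^sup>2 + lam * \<bar>x e\<bar>))"
  proof (rule sum_strict_mono_ex1)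
    show "finite {..<m}" by simp
    show "\<forall>e\<in>{..<m}. d e * ((x e - eps * c e)\<^sup>2 + lam * \<bar>x e - eps * c e\<bar>) \<le> d e * ((x e)\<^sup>2 + lam * \<bar>x e\<bar>)"
      using term_le c2 epos ele lam d by (auto intro!: mult_left_mono less_imp_le)
    show "\<exists>e\<in>{..<m}. d e * ((x e - eps * c e)\<^sup>2 + lam * \<bar>x e - eps * c e\<bar>) < d e * ((x e)\<^sup>2 + lam * \<bar>x e\<bar>)"
      using nz term_dec c2 epos ele lam d by (auto intro!: bexI[of _ e0] mult_strict_left_mono)
  qed
  then show ?thesis using epos unfolding flow_objective_def by auto
qed


lemma col_sum_R:
  assumes "finite R" "src e \<noteq> dst e"
  shows "(\<Sum>u\<in>R. incidence src dst u e) = (if src e \<in> R then 1 else 0) - (if dst e \<in> R then 1 else 0)"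
  using assms by (simp add: incidence_alt sum_subtractf)

lemma weights_nonneg:
  assumes vg: "valid_graph n m src dst"
    and d: "\<forall>e<m. d e > 0" and lam: "lam \<ge> 0"
    and p: "nl \<le> p" "p < n"
    and mn: "flow_minimizer n nl m src dst d lam p x"
    and i: "i < nl"
  shows "flow_weight m src dst x i \<ge> 0"
proof (rule ccontr)
  assume neg: "\<not> flow_weight m src dst x i \<ge> 0"
  define F where "F = flowrel m src dst x"
  define R where "R = {u. u < n \<and> (u, i) \<in> F\<^sup>*}"
  define row where "row u = (\<Sum>e<m. incidence src dst u e * x e)" for u
  have feas: "flow_feasible n nl m src dst p x" using mn unfolding flow_minimizer_def by simp
  have finR: "finite R" unfolding R_def by simp
  have sd: "\<And>e. e < m \<Longrightarrow> src e \<noteq> dst e \<and> src e < n \<and> dst e < n" using vg unfolding valid_graph_def by blast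
  have "(\<Sum>u\<in>R. row u) = (\<Sum>e<m. x e * (\<Sum>u\<in>R. incidence src dst u e))"
    unfolding row_def by (subst sum.swap) (simp add: sum_distrib_left mult.commute)
  also have "\<dots> \<ge> 0"
  proof (rule sum_nonneg)
    fix e assume "e \<in> {..<m}"
    then have e: "e < m" by simp
    note s = sd[OF e]
    have cs: "(\<Sum>u\<in>R. incidence src dst u e) = (if src e \<in> R then 1 else 0) - (if dst e \<in> R then 1 else 0)"
      using col_sum_R[OF finR] s by blast
    show "0 \<le> x e * (\<Sum>u\<in>R. incidence src dst u e)"
    proof (cases "src e \<in> R")
      case True
      show ?thesis
      proof (cases "dst e \<in> R")
        case False
        have "\<not> x e < 0"
        proof
          assume "x e < 0"
          then have "(dst e, src e) \<in> F" unfolding F_def flowrel_def using e by blast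
          then have "dst e \<in> R" using True s unfolding R_def by (auto intro: converse_rtrancl_into_rtrancl)
          then show False using False by simp
        qed
        then show ?thesis using cs True False by simp
      qed (simp add: cs True)
    next
      case False
      show ?thesis
      proof (cases "dst e \<in> R")
        case True
        have "\<not> x e > 0"
        proof
          assume "x e > 0"
          then have "(src e, dst e) \<in> F" unfolding F_def flowrel_def using e by blast
          then have "src e \<in> R" using True s unfolding R_def by (auto intro: converse_rtrancl_into_rtrancl)
          then show False using False by simp
        qed
        then show ?thesis using cs True False by simp
      qed (simp add: cs False)
    qed
  qed
  finally have sumR: "(\<Sum>u\<in>R. row u) \<ge> 0" .
  have iR: "i \<in> R" unfolding R_def using i p by simp
  have "\<exists>j\<in>R. j < nl \<and> j \<noteq> i"
  proof (rule ccontr)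
    assume "\<not> ?thesis"
    then have sub: "\<forall>u\<in>R - {i}. nl \<le> u \<and> u < n" unfolding R_def by auto
    have "(\<Sum>u\<in>R. row u) = row i + (\<Sum>u\<in>R - {i}. row u)"
      using finR iR by (simp add: sum.remove)
    also have "(\<Sum>u\<in>R - {i}. row u) \<le> 0"
    proof (rule sum_nonpos)
      fix u assume "u \<in> R - {i}"
      then have "nl \<le> u \<and> u < n" using sub by blast
      then have "row u = (if u = p then -1 else 0)" using feas unfolding flow_feasible_def row_def by blast
      then show "row u \<le> 0" by simp
    qed
    finally show False using sumR neg unfolding row_def flow_weight_def by linarith
  qed
  then obtain j where jR: "j \<in> R" and j: "j < nl" "j \<noteq> i" by blast
  from jR have "(j, i) \<in> (flowrel m src dst x)\<^sup>*" unfolding R_def F_def by simp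
  from walk_exists[OF vg this] obtain c where
    c1: "\<forall>q. (\<Sum>e<m. incidence src dst q e * c e) = (if q = j then 1 else 0) - (if q = i then 1 else 0)"
    and c2: "\<forall>e<m. (c e > 0 \<longrightarrow> x e > 0) \<and> (c e < 0 \<longrightarrow> x e < 0)" by blast
  have "\<exists>e0<m. c e0 \<noteq> 0"
  proof (rule ccontr)
    assume "\<not> ?thesis"
    then have "(\<Sum>e<m. incidence src dst j e * c e) = 0" by simp
    moreover have "(\<Sum>e<m. incidence src dst j e * c e) = 1" using c1 j by simp
    ultimately show False by simp
  qed
  then obtain e0 where e0: "e0 < m" "c e0 \<noteq> 0" by blast
  from obj_dec[OF d lam c2 e0] obtain eps where eps: "eps > 0"
    and lt: "flow_objective m d lam (\<lambda>e. x e - eps * c e) < flow_objective m d lam x" by blast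
  have "flow_feasible n nl m src dst p (\<lambda>e. x e - eps * c e)"
    unfolding flow_feasible_def
  proof (intro allI impI)
    fix q assume q: "nl \<le> q \<and> q < n"
    have "(\<Sum>e<m. incidence src dst q e * (x e - eps * c e)) =
          (\<Sum>e<m. incidence src dst q e * x e) - eps * (\<Sum>e<m. incidence src dst q e * c e)"
      by (simp add: right_diff_distrib sum_subtractf sum_distrib_left mult.left_commute)
    also have "(\<Sum>e<m. incidence src dst q e * c e) = 0" using c1 q j i by auto
    also have "(\<Sum>e<m. incidence src dst q e * x e) = (if q = p then -1 else 0)"
      using feas q unfolding flow_feasible_def by blast
    finally show "(\<Sum>e<m. incidence src dst q e * (x e - eps * c e)) = (if q = p then -1 else 0)" by simp
  qed
  then have "flow_objective m d lam x \<le> flow_objective m d lam (\<lambda>e. x e - eps * c e)"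
    using mn unfolding flow_minimizer_def by blast
  then show False using lt by simp
qed

lemma weights_sum:
  assumes vg: "valid_graph n m src dst" and nl: "nl < n"
    and p: "nl \<le> p" "p < n"
    and feas: "flow_feasible n nl m src dst p x"
  shows "(\<Sum>i<nl. flow_weight m src dst x i) = 1"
proof -
  have tot: "(\<Sum>i<n. flow_weight m src dst x i) = 0"
  proof -
    have "(\<Sum>i<n. flow_weight m src dst x i) = (\<Sum>e<m. x e * (\<Sum>i<n. incidence src dst i e))"
      unfolding flow_weight_def by (subst sum.swap) (simp add: sum_distrib_left mult.commute)
    also have "\<dots> = 0"
    proof (rule sum.neutral, rule ballI)
      fix e assume "e \<in> {..<m}"
      then have s: "src e \<noteq> dst e" "src e < n" "dst e < n" using vg unfolding valid_graph_def by auto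
      have "(\<Sum>i<n. incidence src dst i e) = 0" using col_sum_R[of "{..<n}" src e dst] s by simp
      then show "x e * (\<Sum>i<n. incidence src dst i e) = 0" by simp
    qed
    finally show ?thesis .
  qed
  have split: "{..<n} = {..<nl} \<union> {nl..<n}" using nl by auto
  have "(\<Sum>i<n. flow_weight m src dst x i) = (\<Sum>i<nl. flow_weight m src dst x i) + (\<Sum>i\<in>{nl..<n}. flow_weight m src dst x i)"
    unfolding split by (rule sum.union_disjoint) auto
  moreover have "(\<Sum>i\<in>{nl..<n}. flow_weight m src dst x i) = (\<Sum>i\<in>{nl..<n}. (if i = p then -1 else 0))"
    using feas unfolding flow_feasible_def flow_weight_def by (intro sum.cong) auto
  moreover have "(\<Sum>i\<in>{nl..<n}. (if i = p then -1 else 0::real)) = -1" using p by simp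
  ultimately show ?thesis using tot by linarith
qed

lemma convex_comb:
  fixes w f :: "nat \<Rightarrow> real"
  assumes "1 \<le> nl" "\<forall>i<nl. w i \<ge> 0" "(\<Sum>i<nl. w i) = 1"
  shows "(\<Sum>i<nl. w i * f i) \<in> {Min (f ` {..<nl}) .. Max (f ` {..<nl})}"
proof -
  have "0 \<in> {..<nl}" using assms(1) by simp
  then have ne: "f ` {..<nl} \<noteq> {}" by blast
  have "(\<Sum>i<nl. w i * Min (f ` {..<nl})) \<le> (\<Sum>i<nl. w i * f i)"
    using assms(2) by (intro sum_mono mult_left_mono) auto
  moreover have "(\<Sum>i<nl. w i * f i) \<le> (\<Sum>i<nl. w i * Max (f ` {..<nl}))"
    using assms(2) by (intro sum_mono mult_left_mono) auto
  ultimately show ?thesis using assms(3) by (simp add: sum_distrib_right[symmetric])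
qed

theorem proposition4:
  fixes n nl m :: nat and src dst :: "nat \<Rightarrow> nat" and d :: "nat \<Rightarrow> real"
    and lam :: real and p :: nat and x :: "nat \<Rightarrow> real"
  assumes "valid_graph n m src dst"
    and "graph_connected n m src dst"
    and "1 \<le> nl" and "nl < n"
    and "\<forall>e<m. d e > 0"
    and "lam \<ge> 0"
    and "nl \<le> p" and "p < n"
    and "flow_minimizer n nl m src dst d lam p x"
  shows "(\<forall>i<nl. flow_weight m src dst x i \<ge> 0)
       \<and> (\<Sum>i<nl. flow_weight m src dst x i) = 1
       \<and> (\<forall>f :: nat \<Rightarrow> real.
            (\<Sum>i<nl. flow_weight m src dst x i * f i) \<in> {Min (f ` {..<nl}) .. Max (f ` {..<nl})})"
proof -
  have A: "\<forall>i<nl. flow_weight m src dst x i \<ge> 0"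
    using weights_nonneg[OF assms(1,5,6,7,8,9)] by blast
  have B: "(\<Sum>i<nl. flow_weight m src dst x i) = 1"
    using weights_sum[OF assms(1,4,7,8)] assms(9) unfolding flow_minimizer_def by blast
  show ?thesis using A B convex_comb[OF assms(3) A B] by blast
qed

end
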